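(* Let $X$ be one of the types below, of rank $l$, with finite Weyl group $W$ having Coxeter number $h$ and exponents $m_1,\dots,m_l$ (so that $\exp(2\pi i m_j/h)$, $j=1,\dots,l$, are the eigenvalues of a Coxeter transformation of $W$). Setting $\zeta=e^{2\pi i/h}$, $$\prod_{j=1}^l\bigl(t^2-\zeta^{m_j}\bigr)=\frac{(1-t^{2h})(1-t^{2p})(1-t^{2q})(1-t^{2r})}{(1-t^2)(1-t^a)(1-t^b)(1-t^h)},$$ where $(a,b,h,p,q,r)$ is given by: $\mathsf A_l$ ($l\ge0$): $(2,\,l+1,\,l+1,\,\tfrac12(l+1),\,\tfrac12(l+1),\,1)$; $\mathsf D_l$ ($l\ge4$): $(4,\,2l-4,\,2l-2,\,l-2,\,2,\,2)$; $\mathsf E_6$: $(6,8,12,3,3,2)$; $\mathsf E_7$: $(8,12,18,4,3,2)$; $\mathsf E_8$: $(12,20,30,5,3,2)$; $\mathsf C_l$ ($l\ge2$): $(2,\,2l,\,2l,\,l,\,1,\,1)$; $\mathsf B_l$ ($l\ge3$): $(4,\,2l-2,\,2l,\,l-1,\,2,\,1)$; $\mathsf F_4$: $(6,8,12,3,2,1)$; $\mathsf G_2$: $(4,4,6,2,1,1)$. *)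

theory Defs
  imports Complex_Main "Jordan_Normal_Form.Char_Poly"
begin

text \<open>Irreducible (reduced) root system types, Bourbaki numbering of simple roots,
  0-indexed here (node i corresponds to Bourbaki's alpha_(i+1)).\<close>

datatype root_type = TA nat | TB nat | TC nat | TD nat | TE6 | TE7 | TE8 | TF4 | TG2

fun admissible_type :: "root_type \<Rightarrow> bool" where
  "admissible_type (TA l) = True"
| "admissible_type (TB l) = (l \<ge> 3)"
| "admissible_type (TC l) = (l \<ge> 2)"
| "admissible_type (TD l) = (l \<ge> 4)"
| "admissible_type _ = True"

fun type_rank :: "root_type \<Rightarrow> nat" where
  "type_rank (TA l) = l"
| "type_rank (TB l) = l"
| "type_rank (TC l) = l"
| "type_rank (TD l) = l"
| "type_rank TE6 = 6"
| "type_rank TE7 = 7"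
| "type_rank TE8 = 8"
| "type_rank TF4 = 4"
| "type_rank TG2 = 2"

text \<open>Edges of the E_8 Dynkin diagram (Bourbaki: 1-3-4-5-6-7-8 and 2-4), 0-indexed;
  E_6 and E_7 are the restrictions to the first 6 resp. 7 nodes.\<close>
definition E_edge :: "nat \<Rightarrow> nat \<Rightarrow> bool" where
  "E_edge i j = ({i, j} \<in> {{0,2},{2,3},{3,4},{4,5},{5,6},{6,7},{1,3}})"

text \<open>Cartan matrix entries a_ij = <alpha_i^vee, alpha_j> = 2(alpha_i,alpha_j)/(alpha_i,alpha_i).\<close>
fun cartan_entry :: "root_type \<Rightarrow> nat \<Rightarrow> nat \<Rightarrow> int" where
  "cartan_entry (TA l) i j =
     (if i = j then 2 else if i + 1 = j \<or> j + 1 = i then -1 else 0)"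
| "cartan_entry (TB l) i j =
     (if i = j then 2
      else if i = l - 1 \<and> j = l - 2 then -2
      else if i + 1 = j \<or> j + 1 = i then -1 else 0)"
| "cartan_entry (TC l) i j =
     (if i = j then 2
      else if i = l - 2 \<and> j = l - 1 then -2
      else if i + 1 = j \<or> j + 1 = i then -1 else 0)"
| "cartan_entry (TD l) i j =
     (if i = j then 2
      else if (i \<le> l - 2 \<and> j \<le> l - 2 \<and> (i + 1 = j \<or> j + 1 = i))
              \<or> {i, j} = {l - 3, l - 1} then -1 else 0)"
| "cartan_entry TE6 i j = (if i = j then 2 else if E_edge i j then -1 else 0)"
| "cartan_entry TE7 i j = (if i = j then 2 else if E_edge i j then -1 else 0)"
| "cartan_entry TE8 i j = (if i = j then 2 else if E_edge i j then -1 else 0)"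
| "cartan_entry TF4 i j =
     (if i = j then 2
      else if i = 2 \<and> j = 1 then -2
      else if i + 1 = j \<or> j + 1 = i then -1 else 0)"
| "cartan_entry TG2 i j =
     (if i = j then 2 else if i = 1 \<and> j = 0 then -3 else -1)"

definition cartan_matrix :: "root_type \<Rightarrow> int mat" where
  "cartan_matrix X = mat (type_rank X) (type_rank X) (\<lambda>(i, j). cartan_entry X i j)"

text \<open>Matrix (w.r.t. the basis of simple roots) of the simple reflection
  s_i(alpha_j) = alpha_j - a_ij alpha_i.\<close>
definition simple_reflection :: "root_type \<Rightarrow> nat \<Rightarrow> int mat" where
  "simple_reflection X i = mat (type_rank X) (type_rank X)
     (\<lambda>(k, j). (if k = j then 1 else 0) - (if k = i then cartan_entry X i j else 0))"

definition coxeter_transformation :: "root_type \<Rightarrow> int mat" where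
  "coxeter_transformation X =
     foldr (\<lambda>i M. simple_reflection X i * M) [0..<type_rank X] (1\<^sub>m (type_rank X))"

definition is_exponent_list :: "root_type \<Rightarrow> nat \<Rightarrow> nat list \<Rightarrow> bool" where
  "is_exponent_list X h ms \<longleftrightarrow>
     length ms = type_rank X \<and> (\<forall>m \<in> set ms. 1 \<le> m \<and> m < h) \<and>
     char_poly (map_mat of_int (coxeter_transformation X) :: complex mat) =
       (\<Prod>m\<leftarrow>ms. [: - cis (2 * pi * real m / real h), 1 :])"

text \<open>The table data (a, b, h, 2p, 2q, 2r). We store 2p, 2q, 2r (always natural numbers)
  since p = (l+1)/2 for type A_l may be a half-integer; only t^(2p) etc. occur.\<close>
fun table_data :: "root_type \<Rightarrow> nat \<times> nat \<times> nat \<times> nat \<times> nat \<times> nat" where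
  "table_data (TA l) = (2, l + 1, l + 1, l + 1, l + 1, 2)"
| "table_data (TD l) = (4, 2*l - 4, 2*l - 2, 2*(l - 2), 4, 4)"
| "table_data TE6 = (6, 8, 12, 6, 6, 4)"
| "table_data TE7 = (8, 12, 18, 8, 6, 4)"
| "table_data TE8 = (12, 20, 30, 10, 6, 4)"
| "table_data (TC l) = (2, 2*l, 2*l, 2*l, 2, 2)"
| "table_data (TB l) = (4, 2*l - 2, 2*l, 2*(l - 1), 4, 2)"
| "table_data TF4 = (6, 8, 12, 6, 4, 2)"
| "table_data TG2 = (4, 4, 6, 4, 2, 2)"

end

theory Submission
  imports Defs
begin


definition detf :: "nat \<Rightarrow> (nat \<Rightarrow> nat \<Rightarrow> 'a::comm_ring_1) \<Rightarrow> 'a" where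
  "detf n f = det (mat n n (\<lambda>(i,j). f i j))"

definition sh :: "nat \<Rightarrow> nat \<Rightarrow> nat" where "sh k i = (if i < k then i else Suc i)"

lemma detf_cong: "(\<And>i j. i < n \<Longrightarrow> j < n \<Longrightarrow> f i j = g i j) \<Longrightarrow> detf n f = detf n g"
  unfolding detf_def by (intro arg_cong[where f=det] eq_matI) auto

lemma detf_0[simp]: "detf 0 f = 1"
  unfolding detf_def by (simp add: det_def)

lemma mat_delete_mat: "mat_delete (mat (Suc n) (Suc n) (\<lambda>(i,j). f i j)) a b
   = mat n n (\<lambda>(i,j). f (sh a i) (sh b j))"
  unfolding mat_delete_def sh_def by (intro eq_matI) auto

lemma detf_expand_last:
  "detf (Suc m) f = (\<Sum>i<Suc m. f i m * ((-1)^(i+m) * detf m (\<lambda>a b. f (sh i a) b)))"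
proof -
  have "detf (Suc m) f = (\<Sum>i<Suc m. mat (Suc m) (Suc m) (\<lambda>(i,j). f i j) $$ (i,m) * cofactor (mat (Suc m) (Suc m) (\<lambda>(i,j). f i j)) i m)"
    unfolding detf_def by (rule laplace_expansion_column) auto
  also have "\<dots> = (\<Sum>i<Suc m. f i m * ((-1)^(i+m) * detf m (\<lambda>a b. f (sh i a) (sh m b))))"
    by (intro sum.cong refl) (auto simp: cofactor_def mat_delete_mat detf_def)
  also have "\<dots> = (\<Sum>i<Suc m. f i m * ((-1)^(i+m) * detf m (\<lambda>a b. f (sh i a) b)))"
    by (intro sum.cong refl arg_cong2[where f="(*)"] refl detf_cong) (auto simp: sh_def)
  finally show ?thesis .
qed

lemma detf_expand_last_row:
  "detf (Suc m) f = (\<Sum>j<Suc m. f m j * ((-1)^(m+j) * detf m (\<lambda>a b. f a (sh j b))))"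
proof -
  have "detf (Suc m) f = (\<Sum>j<Suc m. mat (Suc m) (Suc m) (\<lambda>(i,j). f i j) $$ (m,j) * cofactor (mat (Suc m) (Suc m) (\<lambda>(i,j). f i j)) m j)"
    unfolding detf_def by (rule laplace_expansion_row) auto
  also have "\<dots> = (\<Sum>j<Suc m. f m j * ((-1)^(m+j) * detf m (\<lambda>a b. f (sh m a) (sh j b))))"
    by (intro sum.cong refl) (auto simp: cofactor_def mat_delete_mat detf_def)
  also have "\<dots> = (\<Sum>j<Suc m. f m j * ((-1)^(m+j) * detf m (\<lambda>a b. f a (sh j b))))"
    by (intro sum.cong refl arg_cong2[where f="(*)"] refl detf_cong) (auto simp: sh_def)
  finally show ?thesis .
qed

lemma detf_isolated:
  assumes "\<And>j. j < m \<Longrightarrow> f j m = 0"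
  shows "detf (Suc m) f = f m m * detf m f"
proof -
  have "detf (Suc m) f = (\<Sum>i<Suc m. f i m * ((-1)^(i+m) * detf m (\<lambda>a b. f (sh i a) b)))"
    by (rule detf_expand_last)
  also have "\<dots> = f m m * ((-1)^(m+m) * detf m (\<lambda>a b. f (sh m a) b))"
    by (subst sum.remove[of _ m]) (auto simp: assms intro!: sum.neutral)
  also have "detf m (\<lambda>a b. f (sh m a) b) = detf m f"
    by (rule detf_cong) (auto simp: sh_def)
  finally show ?thesis by simp
qed

lemma detf_leaf:
  assumes k: "k < Suc m" and z: "\<And>j. j < Suc m \<Longrightarrow> j \<noteq> k \<Longrightarrow> f j (Suc m) = 0 \<and> f (Suc m) j = 0"
  shows "detf (Suc (Suc m)) f = f (Suc m) (Suc m) * detf (Suc m) f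
      - f k (Suc m) * f (Suc m) k * detf m (\<lambda>i j. f (sh k i) (sh k j))"
proof -
  have "detf (Suc (Suc m)) f = (\<Sum>i<Suc (Suc m). f i (Suc m) * ((-1)^(i+Suc m) * detf (Suc m) (\<lambda>a b. f (sh i a) b)))"
    by (rule detf_expand_last)
  also have "\<dots> = f (Suc m) (Suc m) * ((-1)^(Suc m+Suc m) * detf (Suc m) (\<lambda>a b. f (sh (Suc m) a) b))
     + f k (Suc m) * ((-1)^(k+Suc m) * detf (Suc m) (\<lambda>a b. f (sh k a) b))"
    using k by (subst sum.remove[of _ "Suc m"], simp, simp, subst sum.remove[of _ k]) (auto simp: z intro!: sum.neutral)
  also have "detf (Suc m) (\<lambda>a b. f (sh (Suc m) a) b) = detf (Suc m) f"
    by (rule detf_cong) (auto simp: sh_def)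
  also have "detf (Suc m) (\<lambda>a b. f (sh k a) b) = (\<Sum>j<Suc m. f (sh k m) j * ((-1)^(m+j) * detf m (\<lambda>a b. f (sh k a) (sh j b))))"
    by (rule detf_expand_last_row)
  also have "\<dots> = f (Suc m) k * ((-1)^(m+k) * detf m (\<lambda>a b. f (sh k a) (sh k b)))"
    using k by (subst sum.remove[of _ k]) (auto simp: z sh_def intro!: sum.neutral)
  finally show ?thesis using k by (simp add: power_add algebra_simps)
qed



definition Sm :: "(nat \<Rightarrow> nat \<Rightarrow> 'a::comm_ring_1) \<Rightarrow> nat \<Rightarrow> nat \<Rightarrow> 'a mat" where
  "Sm a n i = mat n n (\<lambda>(r,c). (if r = c then 1 else 0) - (if r = i then a i c else 0))"
definition Um :: "(nat \<Rightarrow> nat \<Rightarrow> 'a::comm_ring_1) \<Rightarrow> nat \<Rightarrow> nat \<Rightarrow> 'a mat" where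
  "Um a n k = mat n n (\<lambda>(i,j). if i = j then 1 else if i < k then 0 else if i < j then a i j else 0)"
definition Rm :: "(nat \<Rightarrow> nat \<Rightarrow> 'a::comm_ring_1) \<Rightarrow> nat \<Rightarrow> nat \<Rightarrow> 'a mat" where
  "Rm a n k = mat n n (\<lambda>(i,j). if i < k then (if i = j then 1 else 0)
      else - (if i = j then 1 else if j < i then a i j else 0))"
definition Xm :: "(nat \<Rightarrow> nat \<Rightarrow> 'a::comm_ring_1) \<Rightarrow> nat \<Rightarrow> nat \<Rightarrow> 'a mat" where
  "Xm a n k = mat n n (\<lambda>(i,j). if i = k then (if j \<le> k then - (if j = k then 1 else a k j) else 0)
      else (if i = j then 1 else 0))"

lemma sum_single: "finite A \<Longrightarrow> (\<And>j. j \<in> A \<Longrightarrow> j \<noteq> c \<Longrightarrow> g j = 0) \<Longrightarrow> sum g A = (if c \<in> A then g c else 0)"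
  by (metis (mono_tags, lifting) sum.neutral sum.remove DiffE insertCI add_0_right)

lemma US: assumes "k < n" and diag: "\<And>i. a i i = 2"
  shows "Um a n k * Sm a n k = Xm a n k * Um a n (Suc k)"
proof (rule eq_matI)
  fix i j assume i: "i < dim_row (Xm a n k * Um a n (Suc k))" and j: "j < dim_col (Xm a n k * Um a n (Suc k))"
  hence i: "i < n" and j: "j < n" by (auto simp: Xm_def Um_def)
  have l: "(Um a n k * Sm a n k) $$ (i,j) = (\<Sum>c<n. (if i = c then 1 else if i < k then 0 else if i < c then a i c else 0)
      * ((if c = j then 1 else 0) - (if c = k then a k j else 0)))"
    using i j by (simp add: Um_def Sm_def scalar_prod_def atLeast0LessThan)
  also have "\<dots> = (\<Sum>c<n. (if i = c then 1 else if i < k then 0 else if i < c then a i c else 0)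
      * (if c = j then 1 else 0)) - (\<Sum>c<n. (if i = c then 1 else if i < k then 0 else if i < c then a i c else 0)
      * (if c = k then a k j else 0))"
    by (simp add: right_diff_distrib sum_subtractf)
  finally have l0: "(Um a n k * Sm a n k) $$ (i,j) = (\<Sum>c<n. (if i = c then 1 else if i < k then 0 else if i < c then a i c else 0)
      * (if c = j then 1 else 0)) - (\<Sum>c<n. (if i = c then 1 else if i < k then 0 else if i < c then a i c else 0)
      * (if c = k then a k j else 0))" .
  have s1: "(\<Sum>c<n. (if i = c then 1 else if i < k then 0 else if i < c then a i c else 0)
      * (if c = j then 1 else 0)) = (if i = j then 1 else if i < k then 0 else if i < j then a i j else 0)"
    using j by (subst sum_single[of _ j]) auto
  have s2: "(\<Sum>c<n. (if i = c then 1 else if i < k then 0 else if i < c then a i c else 0)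
      * (if c = k then a k j else 0)) = (if i = k then 1 else if i < k then 0 else if i < k then a i k else 0) * a k j"
    using assms(1) by (subst sum_single[of _ k]) auto
  have l: "(Um a n k * Sm a n k) $$ (i,j) = (if i = j then 1 else if i < k then 0 else if i < j then a i j else 0)
       - (if i = k then 1 else if i < k then 0 else if i < k then a i k else 0) * a k j"
    unfolding l0 s1 s2 ..
  have r: "(Xm a n k * Um a n (Suc k)) $$ (i,j) = (\<Sum>c<n. (if i = k then (if c \<le> k then - (if c = k then 1 else a k c) else 0)
      else (if i = c then 1 else 0)) * (if c = j then 1 else if c < Suc k then 0 else if c < j then a c j else 0))"
    using i j by (simp add: Um_def Xm_def scalar_prod_def atLeast0LessThan)
  show "(Um a n k * Sm a n k) $$ (i,j) = (Xm a n k * Um a n (Suc k)) $$ (i,j)"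
  proof (cases "i = k")
    case True
    have "(Xm a n k * Um a n (Suc k)) $$ (i,j) = (\<Sum>c<n. (if c \<le> k then - (if c = k then 1 else a k c) else 0) * (if c = j then 1 else 0))"
      unfolding r using True by (intro sum.cong refl) auto
    also have "\<dots> = (if j \<le> k then - (if j = k then 1 else a k j) else 0)"
      using j by (subst sum_single[of _ j]) auto
    finally show ?thesis using l True diag[of k] by auto
  next
    case False
    have "(Xm a n k * Um a n (Suc k)) $$ (i,j) = (\<Sum>c<n. (if i = c then 1 else 0) * (if c = j then 1 else if c < Suc k then 0 else if c < j then a c j else 0))"
      unfolding r using False by (intro sum.cong refl) auto
    also have "\<dots> = (if i = j then 1 else if i < Suc k then 0 else if i < j then a i j else 0)"
      using i by (subst sum_single[of _ i]) auto
    finally show ?thesis using l False by auto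
  qed
qed (auto simp: Xm_def Um_def Sm_def)

lemma XR: assumes "k < n"
  shows "Xm a n k * Rm a n (Suc k) = Rm a n k"
proof (rule eq_matI)
  fix i j assume i: "i < dim_row (Rm a n k)" and j: "j < dim_col (Rm a n k)"
  hence i: "i < n" and j: "j < n" by (auto simp: Rm_def)
  have r: "(Xm a n k * Rm a n (Suc k)) $$ (i,j) = (\<Sum>c<n. (if i = k then (if c \<le> k then - (if c = k then 1 else a k c) else 0)
      else (if i = c then 1 else 0)) * (if c < Suc k then (if c = j then 1 else 0)
      else - (if c = j then 1 else if j < c then a c j else 0)))"
    using i j by (simp add: Rm_def Xm_def scalar_prod_def atLeast0LessThan)
  show "(Xm a n k * Rm a n (Suc k)) $$ (i,j) = Rm a n k $$ (i,j)"
  proof (cases "i = k")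
    case True
    have "(Xm a n k * Rm a n (Suc k)) $$ (i,j) = (\<Sum>c<n. (if c \<le> k then - (if c = k then 1 else a k c) else 0) * (if c = j then 1 else 0))"
      unfolding r using True by (intro sum.cong refl) auto
    also have "\<dots> = (if j \<le> k then - (if j = k then 1 else a k j) else 0)"
      using j by (subst sum_single[of _ j]) auto
    finally show ?thesis using True i j by (auto simp: Rm_def)
  next
    case False
    have "(Xm a n k * Rm a n (Suc k)) $$ (i,j) = (\<Sum>c<n. (if i = c then 1 else 0) * (if c < Suc k then (if c = j then 1 else 0)
      else - (if c = j then 1 else if j < c then a c j else 0)))"
      unfolding r using False by (intro sum.cong refl) auto
    also have "\<dots> = (if i < Suc k then (if i = j then 1 else 0)
      else - (if i = j then 1 else if j < i then a i j else 0))"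
      using i by (subst sum_single[of _ i]) auto
    finally show ?thesis using False i j by (auto simp: Rm_def)
  qed
qed (auto simp: Xm_def Rm_def)

lemma fold_carrier: "foldr (\<lambda>i M. Sm a n i * M) xs (1\<^sub>m n) \<in> carrier_mat n n"
  by (induction xs) (auto simp: Sm_def)

lemma URfold: assumes "k \<le> n" and diag: "\<And>i. a i i = 2"
  shows "Um a n k * foldr (\<lambda>i M. Sm a n i * M) [k..<n] (1\<^sub>m n) = Rm a n k"
  using assms(1)
proof (induction k rule: inc_induct)
  case base
  have "Um a n n = 1\<^sub>m n" "Rm a n n = 1\<^sub>m n" by (auto simp: Um_def Rm_def intro!: eq_matI)
  then show ?case by simp
next
  case (step k)
  have c: "foldr (\<lambda>i M. Sm a n i * M) [Suc k..<n] (1\<^sub>m n) \<in> carrier_mat n n"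
    by (rule fold_carrier)
  have "[k..<n] = k # [Suc k..<n]" using step by (simp add: upt_conv_Cons)
  hence "Um a n k * foldr (\<lambda>i M. Sm a n i * M) [k..<n] (1\<^sub>m n) = Um a n k * (Sm a n k * foldr (\<lambda>i M. Sm a n i * M) [Suc k..<n] (1\<^sub>m n))"
    by simp
  also have "\<dots> = (Um a n k * Sm a n k) * foldr (\<lambda>i M. Sm a n i * M) [Suc k..<n] (1\<^sub>m n)"
    using c by (subst assoc_mult_mat[of _ n n _ n]) (auto simp: Um_def Sm_def)
  also have "\<dots> = (Xm a n k * Um a n (Suc k)) * foldr (\<lambda>i M. Sm a n i * M) [Suc k..<n] (1\<^sub>m n)"
    using US[where a=a, OF step(2) diag] by simp
  also have "\<dots> = Xm a n k * Rm a n (Suc k)"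
    using c step(3) by (subst assoc_mult_mat[of _ n n _ n]) (auto simp: Um_def Xm_def)
  also have "\<dots> = Rm a n k" by (rule XR[OF step(2)])
  finally show ?case .
qed



definition fX :: "root_type \<Rightarrow> complex \<Rightarrow> nat \<Rightarrow> nat \<Rightarrow> complex" where
  "fX X x i j = (if i = j then x + 1 else if i < j then x * of_int (cartan_entry X i j) else of_int (cartan_entry X i j))"

lemma cartan_diag: "cartan_entry X i i = 2"
  by (cases X) auto

lemma cox_eq: "coxeter_transformation X = foldr (\<lambda>i M. Sm (cartan_entry X) (type_rank X) i * M) [0..<type_rank X] (1\<^sub>m (type_rank X))"
  unfolding coxeter_transformation_def simple_reflection_def Sm_def ..

lemma mult_entry: "A \<in> carrier_mat n n \<Longrightarrow> B \<in> carrier_mat n n \<Longrightarrow> i < n \<Longrightarrow> j < n \<Longrightarrow>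
  (A * B) $$ (i,j) = (\<Sum>c<n. A $$ (i,c) * B $$ (c,j))"
  by (simp add: scalar_prod_def atLeast0LessThan)

lemma charpoly_detf:
  "poly (char_poly (map_mat of_int (coxeter_transformation X) :: complex mat)) x = detf (type_rank X) (fX X x)"
proof -
  define n where "n = type_rank X"
  define C :: "complex mat" where "C = map_mat of_int (coxeter_transformation X)"
  define U :: "complex mat" where "U = map_mat of_int (Um (cartan_entry X) n 0)"
  define R :: "complex mat" where "R = map_mat of_int (Rm (cartan_entry X) n 0)"
  have Cc: "C \<in> carrier_mat n n" unfolding C_def cox_eq n_def using fold_carrier by auto
  have Uc: "U \<in> carrier_mat n n" unfolding U_def by (simp add: Um_def)
  have UC: "U * C = R"
  proof -
    have "Um (cartan_entry X) n 0 * coxeter_transformation X = Rm (cartan_entry X) n 0"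
      unfolding cox_eq n_def by (rule URfold) (auto simp: cartan_diag)
    hence "map_mat (of_int :: int \<Rightarrow> complex) (Um (cartan_entry X) n 0 * coxeter_transformation X) = R"
      unfolding R_def by simp
    moreover have "map_mat (of_int :: int \<Rightarrow> complex) (Um (cartan_entry X) n 0 * coxeter_transformation X) = U * C"
      unfolding U_def C_def
      by (rule of_int_hom.mat_hom_mult[of _ n n _ n]) (auto simp: Um_def cox_eq n_def fold_carrier)
    ultimately show ?thesis by simp
  qed
  have detU: "det U = 1"
  proof -
    have "upper_triangular U" unfolding U_def upper_triangular_def by (auto simp: Um_def)
    hence "det U = prod_list (diag_mat U)" using det_upper_triangular Uc by blast
    also have "diag_mat U = replicate n 1" unfolding diag_mat_def U_def
      by (auto simp: Um_def intro!: replicate_eqI)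
    finally show ?thesis by simp
  qed
  have "poly (char_poly C) x = det (- char_matrix C x)" by (rule char_poly_matrix[OF Cc])
  also have "\<dots> = det U * det (- char_matrix C x)" by (simp add: detU)
  also have "\<dots> = det (U * (- char_matrix C x))" using Uc Cc by (subst det_mult[of _ n]) auto
  also have "U * (- char_matrix C x) = mat n n (\<lambda>(i,j). fX X x i j)"
  proof (rule eq_matI)
    fix i j assume "i < dim_row (mat n n (\<lambda>(i,j). fX X x i j))" "j < dim_col (mat n n (\<lambda>(i,j). fX X x i j))"
    hence i: "i < n" and j: "j < n" by auto
    have M: "\<And>c. c < n \<Longrightarrow> (- char_matrix C x) $$ (c,j) = x * (if c = j then 1 else 0) - C $$ (c,j)"
      using j Cc by (auto simp: char_matrix_def)
    have "(U * (- char_matrix C x)) $$ (i,j) = (\<Sum>c<n. U $$ (i,c) * (- char_matrix C x) $$ (c,j))"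
      using i j Uc Cc by (intro mult_entry) auto
    also have "\<dots> = (\<Sum>c<n. U $$ (i,c) * (x * (if c = j then 1 else 0) - C $$ (c,j)))"
      using M by simp
    also have "\<dots> = x * (\<Sum>c<n. U $$ (i,c) * (if c = j then 1 else 0)) - (\<Sum>c<n. U $$ (i,c) * C $$ (c,j))"
      by (simp add: algebra_simps sum_subtractf sum_distrib_left)
    also have "(\<Sum>c<n. U $$ (i,c) * (if c = j then 1 else 0)) = U $$ (i,j)"
      using j by (subst sum_single[of _ j]) auto
    also have "(\<Sum>c<n. U $$ (i,c) * C $$ (c,j)) = (U * C) $$ (i,j)"
      using i j Uc Cc by (intro mult_entry[symmetric]) auto
    also have "x * U $$ (i,j) - (U * C) $$ (i,j) = fX X x i j"
      unfolding UC using i j by (auto simp: U_def R_def Um_def Rm_def fX_def cartan_diag)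
    finally show "(U * (- char_matrix C x)) $$ (i,j) = mat n n (\<lambda>(i,j). fX X x i j) $$ (i,j)"
      using i j by simp
  qed (use Uc Cc in \<open>auto simp: char_matrix_def\<close>)
  finally show ?thesis unfolding C_def detf_def n_def .
qed



lemma detf_1: "detf (Suc 0) f = f 0 0"
  using detf_isolated[of 0 f] by simp

lemma sh_lt[simp]: "i < k \<Longrightarrow> sh k i = i"
  by (simp add: sh_def)

lemma detA: "detf n (fX (TA l) x) = (\<Sum>k<Suc n. x^k)"
proof (induction n rule: less_induct)
  case (less n)
  show ?case
  proof (cases n)
    case 0 then show ?thesis by simp
  next
    case (Suc n')
    show ?thesis
    proof (cases n')
      case 0 then show ?thesis using Suc by (simp add: detf_1 fX_def cartan_diag)
    next
      case (Suc m)
      have "detf n (fX (TA l) x) = (x+1) * detf (Suc m) (fX (TA l) x) - (x * -1) * (-1) * detf m (fX (TA l) x)"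
        unfolding \<open>n = _\<close> Suc
        by (subst detf_leaf[of m]) (auto simp: fX_def intro!: detf_cong)
      also have "\<dots> = (x+1) * (\<Sum>k<Suc (Suc m). x^k) - x * (\<Sum>k<Suc m. x^k)"
        using less \<open>n = _\<close> Suc by simp
      also have "\<dots> = (\<Sum>k<Suc n. x^k)"
        unfolding \<open>n = _\<close> Suc by (simp add: algebra_simps sum_distrib_left sum.distrib)
      finally show ?thesis .
    qed
  qed
qed

lemma geo: "(1 - x) * (\<Sum>k<n. x^k) = 1 - (x::complex)^n"
  by (rule one_diff_power_eq[symmetric])

lemma Sid: "(\<Sum>k<m. x^k) + x^m = 1 + x * (\<Sum>k<m. (x::complex)^k)"
proof (induction m)
  case (Suc m) 
  have "(\<Sum>k<Suc m. x^k) + x^Suc m = ((\<Sum>k<m. x^k) + x^m) + x * x^m" by simp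
  also have "\<dots> = (1 + x * (\<Sum>k<m. x^k)) + x * x^m" using Suc by simp
  also have "\<dots> = 1 + x * ((\<Sum>k<m. x^k) + x^m)" by (simp add: algebra_simps)
  finally show ?case by simp
qed simp
lemma S1: "(\<Sum>k<Suc n. x^k) = 1 + x * (\<Sum>k<n. (x::complex)^k)"
  by (subst sum.lessThan_Suc_shift) (simp add: sum_distrib_left)

lemma Pw: "x^n = 1 + x * (\<Sum>k<n. x^k) - (\<Sum>k<n. (x::complex)^k)"
  using Sid[of x n] by (simp add: algebra_simps)

lemma detB: assumes "l \<ge> 3" shows "detf l (fX (TB l) x) = 1 + x^l"
proof -
  define m where "m = l - 2"
  have l: "l = Suc (Suc m)" using assms unfolding m_def by simp
  have "detf l (fX (TB l) x) = (x+1) * detf (Suc m) (fX (TB l) x) - (x * -1) * (-2) * detf m (fX (TB l) x)"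
    unfolding l by (subst detf_leaf[of m]) (auto simp: fX_def intro!: detf_cong)
  also have "detf (Suc m) (fX (TB l) x) = detf (Suc m) (fX (TA 0) x)"
    by (rule detf_cong) (auto simp: fX_def l)
  also have "detf m (fX (TB l) x) = detf m (fX (TA 0) x)"
    by (rule detf_cong) (auto simp: fX_def l)
  finally have e: "detf l (fX (TB l) x) = (x+1) * detf (Suc m) (fX (TA 0) x) - (x * -1) * (-2) * detf m (fX (TA 0) x)" .
  show ?thesis unfolding e unfolding detA l diff_Suc_1 S1 power_Suc Pw[of x m] by (simp add: algebra_simps)
qed

lemma detC: assumes "l \<ge> 2" shows "detf l (fX (TC l) x) = 1 + x^l"
proof -
  define m where "m = l - 2"
  have l: "l = Suc (Suc m)" using assms unfolding m_def by simp
  have "detf l (fX (TC l) x) = (x+1) * detf (Suc m) (fX (TC l) x) - (x * -2) * (-1) * detf m (fX (TC l) x)"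
    unfolding l by (subst detf_leaf[of m]) (auto simp: fX_def intro!: detf_cong)
  also have "detf (Suc m) (fX (TC l) x) = detf (Suc m) (fX (TA 0) x)"
    by (rule detf_cong) (auto simp: fX_def l)
  also have "detf m (fX (TC l) x) = detf m (fX (TA 0) x)"
    by (rule detf_cong) (auto simp: fX_def l)
  finally have e: "detf l (fX (TC l) x) = (x+1) * detf (Suc m) (fX (TA 0) x) - (x * -2) * (-1) * detf m (fX (TA 0) x)" .
  show ?thesis unfolding e unfolding detA l diff_Suc_1 S1 power_Suc Pw[of x m] by (simp add: algebra_simps)
qed

lemma detD: assumes "l \<ge> 4" shows "detf l (fX (TD l) x) = (x + 1) * (1 + x^(l-1))"
proof -
  define m where "m = l - 3"
  have l: "l = Suc (Suc (Suc m))" and m: "m \<ge> 1" using assms unfolding m_def by simp_all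
  define g where "g = (\<lambda>i j. fX (TD l) x (sh m i) (sh m j))"
  have "detf l (fX (TD l) x) = (x+1) * detf (Suc (Suc m)) (fX (TD l) x) - (x * -1) * (-1) * detf (Suc m) g"
    unfolding l g_def by (subst detf_leaf[of m]) (auto simp: fX_def)
  also have "detf (Suc (Suc m)) (fX (TD l) x) = detf (Suc (Suc m)) (fX (TA 0) x)"
    by (rule detf_cong) (auto simp: fX_def l doubleton_eq_iff)
  also have "detf (Suc m) g = g m m * detf m g"
    by (rule detf_isolated) (auto simp: g_def fX_def l sh_def)
  also have "g m m = x + 1" by (simp add: g_def fX_def sh_def)
  also have "detf m g = detf m (fX (TA 0) x)"
    by (rule detf_cong) (auto simp: fX_def l g_def)
  finally have e: "detf l (fX (TD l) x) = (x+1) * detf (Suc (Suc m)) (fX (TA 0) x) - (x * -1) * (-1) * ((x+1) * detf m (fX (TA 0) x))" .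
  show ?thesis unfolding e unfolding detA l diff_Suc_1 S1 power_Suc Pw[of x m] by (simp add: algebra_simps)
qed


lemma E_edge_iff: "E_edge i j \<longleftrightarrow> (i=0\<and>j=2) \<or> (i=2\<and>j=0) \<or> (i=2\<and>j=3) \<or> (i=3\<and>j=2) \<or> (i=3\<and>j=4) \<or> (i=4\<and>j=3)
   \<or> (i=4\<and>j=5) \<or> (i=5\<and>j=4) \<or> (i=5\<and>j=6) \<or> (i=6\<and>j=5) \<or> (i=6\<and>j=7) \<or> (i=7\<and>j=6) \<or> (i=1\<and>j=3) \<or> (i=3\<and>j=1)"
  unfolding E_edge_def by (auto simp: doubleton_eq_iff)
lemma leaf_chain:
  assumes "\<And>j. j < m \<Longrightarrow> f j (Suc m) = 0 \<and> f (Suc m) j = 0"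
  shows "detf (Suc (Suc m)) f = f (Suc m) (Suc m) * detf (Suc m) f - f m (Suc m) * f (Suc m) m * detf m f"
proof -
  have "detf (Suc (Suc m)) f = f (Suc m) (Suc m) * detf (Suc m) f - f m (Suc m) * f (Suc m) m * detf m (\<lambda>i j. f (sh m i) (sh m j))"
    by (rule detf_leaf) (use assms in auto)
  also have "detf m (\<lambda>i j. f (sh m i) (sh m j)) = detf m f" by (rule detf_cong) auto
  finally show ?thesis .
qed
lemma leaf_chain':
  assumes "n = Suc (Suc m)" "m1 = Suc m" "\<And>j. j < m \<Longrightarrow> f j m1 = 0 \<and> f m1 j = 0"
  shows "detf n f = f m1 m1 * detf m1 f - f m m1 * f m1 m * detf m f"
  using leaf_chain[of m f] assms by simp
lemma detf_isolated':
  assumes "n = Suc m" "\<And>j. j < m \<Longrightarrow> f j m = 0"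
  shows "detf n f = f m m * detf m f"
  using detf_isolated[of m f] assms by simp

lemma detf_1': "detf 1 f = f 0 0" using detf_1 by simp

lemma detf_expand_num: "detf (numeral k) f = (\<Sum>i<numeral k. f i (pred_numeral k) * ((-1)^(i + pred_numeral k) * detf (pred_numeral k) (\<lambda>a b. f (sh i a) b)))"
  unfolding numeral_eq_Suc by (rule detf_expand_last)

lemma E4: "detf 4 (fX TE8 x) = x^4 + x^3 + x^2 + x + 1"
  by (simp add: detf_expand_num detf_1 detf_1' lessThan_nat_numeral sh_def fX_def E_edge_iff algebra_simps power2_eq_square power3_eq_cube power4_eq_xxxx)

lemma E3: "detf 3 (fX TE8 x) = x^3 + 2*x^2 + 2*x + 1"
  by (simp add: detf_expand_num detf_1 detf_1' lessThan_nat_numeral sh_def fX_def E_edge_iff algebra_simps power2_eq_square power3_eq_cube)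

lemma E5s: "detf 5 (fX TE8 x) = (x+1) * detf 4 (fX TE8 x) - x * detf 3 (fX TE8 x)"
  by (rule leaf_chain'[of 5 3 4, THEN trans]) (auto simp: fX_def E_edge_iff)
lemma E6s: "detf 6 (fX TE8 x) = (x+1) * detf 5 (fX TE8 x) - x * detf 4 (fX TE8 x)"
  by (rule leaf_chain'[of 6 4 5, THEN trans]) (auto simp: fX_def E_edge_iff)
lemma E7s: "detf 7 (fX TE8 x) = (x+1) * detf 6 (fX TE8 x) - x * detf 5 (fX TE8 x)"
  by (rule leaf_chain'[of 7 5 6, THEN trans]) (auto simp: fX_def E_edge_iff)
lemma E8s: "detf 8 (fX TE8 x) = (x+1) * detf 7 (fX TE8 x) - x * detf 6 (fX TE8 x)"
  by (rule leaf_chain'[of 8 6 7, THEN trans]) (auto simp: fX_def E_edge_iff)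

lemma E5: "detf 5 (fX TE8 x) = x^5 + x^4 + x + 1"
proof -
  have "(x+1) * (x^4 + x^3 + x^2 + x + 1) - x * (x^3 + 2*x^2 + 2*x + 1) = (x^5 + x^4 + x + 1::complex)"
    by (simp add: algebra_simps numeral_eq_Suc)
  then show ?thesis unfolding E5s E4 E3 .
qed
lemma detE6: "detf 6 (fX TE8 x) = x^6 + x^5 - x^3 + x + 1"
proof -
  have "(x+1) * (x^5 + x^4 + x + 1) - x * (x^4 + x^3 + x^2 + x + 1) = (x^6 + x^5 - x^3 + x + 1::complex)"
    by (simp add: algebra_simps numeral_eq_Suc)
  then show ?thesis unfolding E6s E5 E4 .
qed
lemma detE7: "detf 7 (fX TE8 x) = x^7 + x^6 - x^4 - x^3 + x + 1"
proof -
  have "(x+1) * (x^6 + x^5 - x^3 + x + 1) - x * (x^5 + x^4 + x + 1) = (x^7 + x^6 - x^4 - x^3 + x + 1::complex)"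
    by (simp add: algebra_simps numeral_eq_Suc)
  then show ?thesis unfolding E7s detE6 E5 .
qed
lemma detE8: "detf 8 (fX TE8 x) = x^8 + x^7 - x^5 - x^4 - x^3 + x + 1"
proof -
  have "(x+1) * (x^7 + x^6 - x^4 - x^3 + x + 1) - x * (x^6 + x^5 - x^3 + x + 1) = (x^8 + x^7 - x^5 - x^4 - x^3 + x + 1::complex)"
    by (simp add: algebra_simps numeral_eq_Suc)
  then show ?thesis unfolding E8s detE7 detE6 .
qed

lemma fE67: "fX TE6 x = fX TE8 x" "fX TE7 x = fX TE8 x"
  by (auto simp: fX_def fun_eq_iff)

lemma F2s: "detf 2 (fX TF4 x) = (x+1) * detf 1 (fX TF4 x) - x * detf 0 (fX TF4 x)"
  by (rule leaf_chain'[of 2 0 1, THEN trans]) (auto simp: fX_def)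
lemma F3s: "detf 3 (fX TF4 x) = (x+1) * detf 2 (fX TF4 x) - 2 * x * detf 1 (fX TF4 x)"
  by (rule leaf_chain'[of 3 1 2, THEN trans]) (auto simp: fX_def)
lemma F4s: "detf 4 (fX TF4 x) = (x+1) * detf 3 (fX TF4 x) - x * detf 2 (fX TF4 x)"
  by (rule leaf_chain'[of 4 2 3, THEN trans]) (auto simp: fX_def)
lemma F1: "detf 1 (fX TF4 x) = x + 1" using detf_1'[of "fX TF4 x"] by (simp add: fX_def)
lemma F2: "detf 2 (fX TF4 x) = x^2 + x + 1" unfolding F2s F1 by (simp add: algebra_simps power2_eq_square)
lemma F3: "detf 3 (fX TF4 x) = x^3 + 1" unfolding F3s F2 F1 by (simp add: algebra_simps numeral_eq_Suc)
lemma detF: "detf 4 (fX TF4 x) = x^4 - x^2 + 1" unfolding F4s F3 F2 by (simp add: algebra_simps numeral_eq_Suc)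

lemma G2s: "detf 2 (fX TG2 x) = (x+1) * detf 1 (fX TG2 x) - 3 * x * detf 0 (fX TG2 x)"
  by (rule leaf_chain'[of 2 0 1, THEN trans]) (auto simp: fX_def)
lemma detG: "detf 2 (fX TG2 x) = x^2 - x + 1"
  unfolding G2s detf_1' detf_0 by (simp add: fX_def algebra_simps power2_eq_square)



lemma poly_prod_map: "poly (\<Prod>m\<leftarrow>ms. f m) y = (\<Prod>m\<leftarrow>ms. poly (f m) y)"
  by (induction ms) auto

lemma lhs_eq:
  assumes "is_exponent_list X h ms"
  shows "(\<Prod>m\<leftarrow>ms. t^2 - cis (2 * pi / real h) ^ m) = detf (type_rank X) (fX X (t^2))"
proof -
  have cp: "char_poly (map_mat of_int (coxeter_transformation X) :: complex mat) =
       (\<Prod>m\<leftarrow>ms. [: - cis (2 * pi * real m / real h), 1 :])"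
    using assms unfolding is_exponent_list_def by blast
  have "(\<Prod>m\<leftarrow>ms. t^2 - cis (2 * pi / real h) ^ m) = (\<Prod>m\<leftarrow>ms. poly [: - cis (2 * pi * real m / real h), 1 :] (t^2))"
    by (intro arg_cong[where f=prod_list] map_cong refl) (simp add: DeMoivre mult.commute)
  also have "\<dots> = poly (char_poly (map_mat of_int (coxeter_transformation X) :: complex mat)) (t^2)"
    unfolding cp poly_prod_map ..
  also have "\<dots> = detf (type_rank X) (fX X (t^2))" by (rule charpoly_detf)
  finally show ?thesis .
qed

lemma algD: "(s + 1) * (1 + z) * ((1 - s) * (1 - s^2) * (1 - w) * (1 - z)) = (1 - z^2) * (1 - w) * (1 - s^2) * (1 - (s::complex)^2)"
  by (simp add: algebra_simps power2_eq_square)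

theorem mainTheorem6:
  fixes X :: root_type and a b h p2 q2 r2 :: nat and ms :: "nat list" and t :: complex
  assumes "admissible_type X"
    and "table_data X = (a, b, h, p2, q2, r2)"
    and "is_exponent_list X h ms"
    and "(1 - t^2) * (1 - t^a) * (1 - t^b) * (1 - t^h) \<noteq> 0"
  shows "(\<Prod>m\<leftarrow>ms. t^2 - cis (2 * pi / real h) ^ m) =
         ((1 - t^(2*h)) * (1 - t^p2) * (1 - t^q2) * (1 - t^r2)) /
         ((1 - t^2) * (1 - t^a) * (1 - t^b) * (1 - t^h))"
proof -
  note D = assms(4)
  have L: "(\<Prod>m\<leftarrow>ms. t^2 - cis (2 * pi / real h) ^ m) = detf (type_rank X) (fX X (t^2))"
    by (rule lhs_eq[OF assms(3)])
  have key: "detf (type_rank X) (fX X (t^2)) * ((1 - t^2) * (1 - t^a) * (1 - t^b) * (1 - t^h)) =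
         ((1 - t^(2*h)) * (1 - t^p2) * (1 - t^q2) * (1 - t^r2))"
  proof (cases X)
    case (TA l)
    with assms(2) have v: "a = 2" "b = l+1" "h = l+1" "p2 = l+1" "q2 = l+1" "r2 = 2" by auto
    have N: "1 - t^(2*h) = (1 - t^2) * (\<Sum>k<Suc l. (t^2)^k)"
      unfolding v power_mult one_diff_power_eq by simp
    show ?thesis unfolding TA v(1-6) detA type_rank.simps N[unfolded v] by (simp add: mult_ac)
  next
    case (TB l)
    with assms(1,2) have v: "a = 4" "b = 2*l-2" "h = 2*l" "p2 = 2*l-2" "q2 = 4" "r2 = 2" and l: "l \<ge> 3" by auto
    have N: "t^(2*(2*l)) = (t^(2*l))^2" "(t^2)^l = t^(2*l)" "t^4 = (t^2)^2"
      by (simp_all add: power_mult[symmetric] mult_ac)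
    show ?thesis unfolding TB v(1-6) detB[OF l] type_rank.simps N by (simp add: algebra_simps power2_eq_square)
  next
    case (TC l)
    with assms(1,2) have v: "a = 2" "b = 2*l" "h = 2*l" "p2 = 2*l" "q2 = 2" "r2 = 2" and l: "l \<ge> 2" by auto
    have N: "t^(2*(2*l)) = (t^(2*l))^2" "(t^2)^l = t^(2*l)"
      by (simp_all add: power_mult[symmetric] mult_ac)
    show ?thesis unfolding TC v(1-6) detC[OF l] type_rank.simps N by (simp add: algebra_simps power2_eq_square)
  next
    case (TD l)
    with assms(1,2) have v: "a = 4" "b = 2*l-4" "h = 2*l-2" "p2 = 2*l-4" "q2 = 4" "r2 = 4" and l: "l \<ge> 4" by auto
    have N: "t^(2*(2*l-2)) = (t^(2*l-2))^2" "(t^2)^(l-1) = t^(2*l-2)" "t^4 = (t^2)^2"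
      by (simp_all add: power_mult[symmetric] mult_ac right_diff_distrib')
    show ?thesis unfolding TD v(1-6) detD[OF l] type_rank.simps N by (rule algD)
  next
    case TE6
    with assms(2) have v: "a = 6" "b = 8" "h = 12" "p2 = 6" "q2 = 6" "r2 = 4" by auto
    show ?thesis unfolding TE6 v type_rank.simps fE67 detE6 detE7 detE8 by (simp add: algebra_simps numeral_eq_Suc)
  next
    case TE7
    with assms(2) have v: "a = 8" "b = 12" "h = 18" "p2 = 8" "q2 = 6" "r2 = 4" by auto
    show ?thesis unfolding TE7 v type_rank.simps fE67 detE6 detE7 detE8 by (simp add: algebra_simps numeral_eq_Suc)
  next
    case TE8
    with assms(2) have v: "a = 12" "b = 20" "h = 30" "p2 = 10" "q2 = 6" "r2 = 4" by auto
    show ?thesis unfolding TE8 v type_rank.simps detE6 detE7 detE8 by (simp add: algebra_simps numeral_eq_Suc)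
  next
    case TF4
    with assms(2) have v: "a = 6" "b = 8" "h = 12" "p2 = 6" "q2 = 4" "r2 = 2" by auto
    show ?thesis unfolding TF4 v type_rank.simps detF by (simp add: algebra_simps numeral_eq_Suc)
  next
    case TG2
    with assms(2) have v: "a = 4" "b = 4" "h = 6" "p2 = 4" "q2 = 2" "r2 = 2" by auto
    show ?thesis unfolding TG2 v type_rank.simps detG by (simp add: algebra_simps numeral_eq_Suc)
  qed
  show ?thesis unfolding L nonzero_eq_divide_eq[OF D] by (rule key)
qed

end
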